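(* Let $(x_t)_{t=1}^T$ be a sequence with $x_t>0$ for all $t$. Then for any $\alpha\in[0,1]$, $$\sum_{t=1}^T\frac{x_t^{1-\alpha}}{\sqrt{1+\sum_{s=1}^t x_s^{1-2\alpha}}}\le\mathcal{O}\Big(\sqrt{\Big(\sum_{t=1}^Tx_t\Big)\log\Big(1+\sum_{t=1}^Tx_t^{1-2\alpha}\Big)}\Big).$$
   Context: $\mathcal{O}(\cdot)$ hides an absolute constant (independent of $T$, $\alpha$ and the sequence). *)

theory Defs
  imports Complex_Main
begin

end

theory Submission
  imports Defs "HOL-Analysis.Convex"
begin

lemma log_step:
  fixes P a :: real
  assumes "P \<ge> 1" "a \<ge> 0"
  shows "a / (P + a) \<le> ln (P + a) - ln P"
proof -
  have q: "P + a > 0" using assms by linarith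
  have "ln (P / (P + a)) \<le> P / (P + a) - 1"
    using ln_le_minus_one[of "P/(P+a)"] assms q by simp
  also have "\<dots> = - (a / (P + a))" using q by (simp add: field_simps)
  finally show ?thesis using ln_div[of P "P+a"] assms q by simp
qed

lemma log_sum:
  fixes a :: "nat \<Rightarrow> real"
  shows "(\<forall>t\<in>{1..T}. a t \<ge> 0) \<longrightarrow>
    (\<Sum>t=1..T. a t / (1 + (\<Sum>s=1..t. a s))) \<le> ln (1 + (\<Sum>t=1..T. a t))"
proof (induction T)
  case 0
  then show ?case by simp
next
  case (Suc T)
  show ?case
  proof
    assume h: "\<forall>t\<in>{1..Suc T}. a t \<ge> 0"
    then have ih: "(\<Sum>t=1..T. a t / (1 + (\<Sum>s=1..t. a s))) \<le> ln (1 + (\<Sum>t=1..T. a t))"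
      using Suc by auto
    have nn: "(\<Sum>t=1..T. a t) \<ge> 0" using h by (intro sum_nonneg) auto
    have aS: "a (Suc T) \<ge> 0" using h by auto
    have st: "a (Suc T) / (1 + (\<Sum>t=1..T. a t) + a (Suc T))
       \<le> ln (1 + (\<Sum>t=1..T. a t) + a (Suc T)) - ln (1 + (\<Sum>t=1..T. a t))"
      using log_step[of "1 + (\<Sum>t=1..T. a t)" "a (Suc T)"] nn aS by simp
    show "(\<Sum>t=1..Suc T. a t / (1 + (\<Sum>s=1..t. a s))) \<le> ln (1 + (\<Sum>t=1..Suc T. a t))"
      using ih st by (simp add: add.assoc)
  qed
qed

theorem lemma2:
  shows "\<exists>C::real. \<forall>(T::nat) (x::nat \<Rightarrow> real) (\<alpha>::real).
    (\<forall>t\<in>{1..T}. x t > 0) \<longrightarrow> 0 \<le> \<alpha> \<longrightarrow> \<alpha> \<le> 1 \<longrightarrow>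
    (\<Sum>t=1..T. x t powr (1 - \<alpha>) / sqrt (1 + (\<Sum>s=1..t. x s powr (1 - 2*\<alpha>))))
      \<le> C * sqrt ((\<Sum>t=1..T. x t) * ln (1 + (\<Sum>t=1..T. x t powr (1 - 2*\<alpha>))))"
proof (intro exI[of _ 1] allI impI)
  fix T :: nat and x :: "nat \<Rightarrow> real" and \<alpha> :: real
  assume pos: "\<forall>t\<in>{1..T}. x t > 0"
  define a where "a t = x t powr (1 - 2*\<alpha>)" for t
  define S where "S t = (\<Sum>s=1..t. a s)" for t
  have a0: "\<forall>t\<in>{1..T}. a t \<ge> 0" unfolding a_def by auto
  have S0: "S t \<ge> 0" if "t \<le> T" for t
    unfolding S_def using a0 that by (intro sum_nonneg) auto
  define f where "f t = sqrt (x t)" for t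
  define g where "g t = sqrt (a t / (1 + S t))" for t
  have eq: "x t powr (1 - \<alpha>) / sqrt (1 + S t) = f t * g t" if "t \<in> {1..T}" for t
  proof -
    have xt: "x t > 0" using pos that by auto
    have St: "1 + S t > 0" using S0[of t] that by auto
    have "x t powr (1 - \<alpha>) = sqrt (x t powr (2 - 2*\<alpha>))"
    proof -
      have "sqrt (x t powr (2 - 2*\<alpha>)) = (x t powr (2 - 2*\<alpha>)) powr (1/2)"
        using xt by (simp add: powr_half_sqrt)
      also have "\<dots> = x t powr ((2 - 2*\<alpha>) * (1/2))" by (simp add: powr_powr)
      also have "(2 - 2*\<alpha>) * (1/2) = 1 - \<alpha>" by simp
      finally show ?thesis by simp
    qed
    also have "x t powr (2 - 2*\<alpha>) = x t * a t"
      unfolding a_def using xt powr_add[of "x t" 1 "1 - 2*\<alpha>"] by simp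
    finally show ?thesis
      unfolding f_def g_def using St by (simp add: real_sqrt_mult real_sqrt_divide)
  qed
  have "(\<Sum>t=1..T. x t powr (1 - \<alpha>) / sqrt (1 + S t)) = (\<Sum>t=1..T. f t * g t)"
    using eq by (intro sum.cong) auto
  also have "\<dots> \<le> sqrt ((\<Sum>t=1..T. (f t)\<^sup>2) * (\<Sum>t=1..T. (g t)\<^sup>2))"
    using Cauchy_Schwarz_ineq_sum[of f g "{1..T}"] real_le_rsqrt by blast
  also have "(\<Sum>t=1..T. (f t)\<^sup>2) = (\<Sum>t=1..T. x t)"
    unfolding f_def using pos by (intro sum.cong) (auto simp: less_imp_le)
  also have "(\<Sum>t=1..T. (g t)\<^sup>2) = (\<Sum>t=1..T. a t / (1 + S t))"
    unfolding g_def using a0 S0 by (intro sum.cong) auto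
  also have "(\<Sum>t=1..T. x t) * \<dots> \<le> (\<Sum>t=1..T. x t) * ln (1 + S T)"
    using log_sum[of T a] a0 pos unfolding S_def
    by (intro mult_left_mono) (auto intro!: sum_nonneg simp: less_imp_le)
  finally show "(\<Sum>t=1..T. x t powr (1 - \<alpha>) / sqrt (1 + (\<Sum>s=1..t. x s powr (1 - 2*\<alpha>))))
      \<le> 1 * sqrt ((\<Sum>t=1..T. x t) * ln (1 + (\<Sum>t=1..T. x t powr (1 - 2*\<alpha>))))"
    unfolding S_def a_def by simp
qed

end
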